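(* Let $k\ge 1$, and let $E_k$, $\oplus$, $\mathcal A_k$ be as in the context. Then: (i) $(E_k,\oplus,\emptyset,\Gamma^k)$ is an effect algebra, and every element of $\mathcal A_k$ belongs to $E_k$. (ii) For every state $\rho$ on $E_k$, the function $P_\rho(\alpha_1\dots\alpha_k\mid a_1\dots a_k)=\rho\big([a_1\alpha_1]\times\cdots\times[a_k\alpha_k]\big)$ is a PR-state (in particular it satisfies the no-signaling condition). Conversely, for every PR-state $P$ there is a unique state $\rho_P$ on $E_k$ with $\rho_P\big([a_1\alpha_1]\times\cdots\times[a_k\alpha_k]\big)=P(\alpha_1\dots\alpha_k\mid a_1\dots a_k)$ for all inputs and outputs; it is given by $\rho_P(q_1\cup\dots\cup q_n)=\sum_{i=1}^n\rho_P(q_i)$ for any decomposition of an element of $E_k$ into pairwise disjoint $q_i\in\mathcal A_k$, and this value does not depend on the chosen decomposition. Hence $\rho\mapsto P_\rho$ is a bijection between the set of states on $E_k$ and the set of PR-states of the $k$-box model.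
   Context: Fix an integer $N\ge1$ (number of inputs) and nonempty finite sets $\mathcal U_1,\dots,\mathcal U_N$ ($\mathcal U_a$ is the set of outputs for input $a$). Put $\Gamma=\mathcal U_1\times\cdots\times\mathcal U_N$. For $a\in\{1,\dots,N\}$ and $\mathcal A\subseteq\mathcal U_a$ let $[a\in\mathcal A]=\{\gamma\in\Gamma:\gamma_a\in\mathcal A\}$ and $[a\alpha]=[a\in\{\alpha\}]$. For $k\ge1$ let $\mathcal A_k=\{[a_1\alpha_1]\times\cdots\times[a_k\alpha_k]\subseteq\Gamma^k : a_i\in\{1,\dots,N\},\ \alpha_i\in\mathcal U_{a_i}\}$. Call a subset of $\Gamma^k$ decomposable if it is a union of pairwise disjoint members of $\mathcal A_k$ (the empty union, giving $\emptyset$, is allowed). Let $E_k$ be the family of all $p\subseteq\Gamma^k$ such that both $p$ and $\Gamma^k\setminus p$ are decomposable. For $p,q\in E_k$, $p\oplus q$ is defined iff $p\cap q=\emptyset$ and $\Gamma^k\setminus(p\cup q)$ is decomposable, and then $p\oplus q=p\cup q$. An effect algebra is a set $E$ with a partial binary operation $\oplus$ and elements $0,1$ such that: (E1) if $p\oplus q$ is defined then $q\oplus p$ is defined and equal; (E2) if $q\oplus r$ and $p\oplus(q\oplus r)$ are defined then $p\oplus q$ and $(p\oplus q)\oplus r$ are defined and $p\oplus(q\oplus r)=(p\oplus q)\oplus r$; (E3) for each $p$ there is a unique $q$ with $p\oplus q=1$; (E4) if $p\oplus1$ is defined then $p=0$. A state on an effect algebra is a map $\rho:E\to[0,1]$ with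 $\rho(1)=1$ and $\rho(p_1\oplus\dots\oplus p_n)=\sum_i\rho(p_i)$ whenever the left side is defined. A PR-state of the $k$-box model is a function $P(\alpha_1\dots\alpha_k\mid a_1\dots a_k)\ge0$, defined for $a_i\in\{1,\dots,N\}$, $\alpha_i\in\mathcal U_{a_i}$, such that for each input tuple $\sum_{\alpha_1,\dots,\alpha_k}P(\alpha_1\dots\alpha_k\mid a_1\dots a_k)=1$, and satisfying no-signaling: for every $i$, every $a_1,\dots,a_k$, every $b_i$ and every fixed $\alpha_j$ ($j\ne i$), $\sum_{\alpha_i\in\mathcal U_{a_i}}P(\alpha_1\dots\alpha_i\dots\alpha_k\mid a_1\dots a_i\dots a_k)=\sum_{\beta_i\in\mathcal U_{b_i}}P(\alpha_1\dots\beta_i\dots\alpha_k\mid a_1\dots b_i\dots a_k)$. *)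

theory Defs
  imports Complex_Main "HOL-Library.FuncSet"
begin

text \<open>Inputs are natural numbers in {1..N}; outputs for input a form the finite
nonempty set U a (of an arbitrary type 'o). Gamma^k is modelled by
lists of length k of points of Gamma; input/output tuples are lists of length k.\<close>

definition gam :: "nat \<Rightarrow> (nat \<Rightarrow> 'o set) \<Rightarrow> (nat \<Rightarrow> 'o) set" where
  "gam N U = PiE {1..N} U"

definition gamk :: "nat \<Rightarrow> (nat \<Rightarrow> 'o set) \<Rightarrow> nat \<Rightarrow> (nat \<Rightarrow> 'o) list set" where
  "gamk N U k = {xs. length xs = k \<and> set xs \<subseteq> gam N U}"

definition cylset :: "nat \<Rightarrow> (nat \<Rightarrow> 'o set) \<Rightarrow> nat \<Rightarrow> 'o set \<Rightarrow> (nat \<Rightarrow> 'o) set" where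
  "cylset N U a A = {\<gamma> \<in> gam N U. \<gamma> a \<in> A}"

definition cyl :: "nat \<Rightarrow> (nat \<Rightarrow> 'o set) \<Rightarrow> nat \<Rightarrow> 'o \<Rightarrow> (nat \<Rightarrow> 'o) set" where
  "cyl N U a \<alpha> = cylset N U a {\<alpha>}"

definition inputs :: "nat \<Rightarrow> nat \<Rightarrow> nat list set" where
  "inputs N k = {as. length as = k \<and> (\<forall>i<k. as ! i \<in> {1..N})}"

definition outs :: "(nat \<Rightarrow> 'o set) \<Rightarrow> nat list \<Rightarrow> 'o list set" where
  "outs U as = {al. length al = length as \<and> (\<forall>i<length as. al ! i \<in> U (as ! i))}"

definition IO :: "nat \<Rightarrow> (nat \<Rightarrow> 'o set) \<Rightarrow> nat \<Rightarrow> (nat list \<times> 'o list) set" where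
  "IO N U k = {(as, al). as \<in> inputs N k \<and> al \<in> outs U as}"

definition box :: "nat \<Rightarrow> (nat \<Rightarrow> 'o set) \<Rightarrow> nat list \<Rightarrow> 'o list \<Rightarrow> (nat \<Rightarrow> 'o) list set" where
  "box N U as al = {xs. length xs = length as \<and> (\<forall>i<length as. xs ! i \<in> cyl N U (as ! i) (al ! i))}"

definition Ak :: "nat \<Rightarrow> (nat \<Rightarrow> 'o set) \<Rightarrow> nat \<Rightarrow> (nat \<Rightarrow> 'o) list set set" where
  "Ak N U k = {box N U as al | as al. (as, al) \<in> IO N U k}"

definition decomposable :: "nat \<Rightarrow> (nat \<Rightarrow> 'o set) \<Rightarrow> nat \<Rightarrow> (nat \<Rightarrow> 'o) list set \<Rightarrow> bool" where
  "decomposable N U k p = (\<exists>F. F \<subseteq> Ak N U k \<and> pairwise disjnt F \<and> \<Union>F = p)"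

definition Ek :: "nat \<Rightarrow> (nat \<Rightarrow> 'o set) \<Rightarrow> nat \<Rightarrow> (nat \<Rightarrow> 'o) list set set" where
  "Ek N U k = {p. p \<subseteq> gamk N U k \<and> decomposable N U k p \<and> decomposable N U k (gamk N U k - p)}"

text \<open>partial operation: None = undefined\<close>
definition oplusk :: "nat \<Rightarrow> (nat \<Rightarrow> 'o set) \<Rightarrow> nat \<Rightarrow> (nat \<Rightarrow> 'o) list set \<Rightarrow> (nat \<Rightarrow> 'o) list set
    \<Rightarrow> (nat \<Rightarrow> 'o) list set option" where
  "oplusk N U k p q =
     (if p \<inter> q = {} \<and> decomposable N U k (gamk N U k - (p \<union> q)) then Some (p \<union> q) else None)"

definition effect_algebra :: "'a set \<Rightarrow> ('a \<Rightarrow> 'a \<Rightarrow> 'a option) \<Rightarrow> 'a \<Rightarrow> 'a \<Rightarrow> bool" where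
  "effect_algebra E f zero one \<longleftrightarrow>
     zero \<in> E \<and> one \<in> E \<and>
     (\<forall>p\<in>E. \<forall>q\<in>E. \<forall>r. f p q = Some r \<longrightarrow> r \<in> E) \<and>
     (\<forall>p\<in>E. \<forall>q\<in>E. \<forall>r. f p q = Some r \<longrightarrow> f q p = Some r) \<and>
     (\<forall>p\<in>E. \<forall>q\<in>E. \<forall>r\<in>E. \<forall>s t. f q r = Some s \<and> f p s = Some t \<longrightarrow>
         (\<exists>u. f p q = Some u \<and> f u r = Some t)) \<and>
     (\<forall>p\<in>E. \<exists>!q. q \<in> E \<and> f p q = Some one) \<and>
     (\<forall>p\<in>E. f p one \<noteq> None \<longrightarrow> p = zero)"

fun osum :: "('a \<Rightarrow> 'a \<Rightarrow> 'a option) \<Rightarrow> 'a list \<Rightarrow> 'a option" where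
  "osum f [] = None"
| "osum f [p] = Some p"
| "osum f (p # q # ps) = Option.bind (osum f (q # ps)) (f p)"

definition is_state :: "'a set \<Rightarrow> ('a \<Rightarrow> 'a \<Rightarrow> 'a option) \<Rightarrow> 'a \<Rightarrow> ('a \<Rightarrow> real) \<Rightarrow> bool" where
  "is_state E f one \<rho> \<longleftrightarrow>
     (\<forall>p\<in>E. 0 \<le> \<rho> p \<and> \<rho> p \<le> 1) \<and> \<rho> one = 1 \<and>
     (\<forall>ps s. ps \<noteq> [] \<and> set ps \<subseteq> E \<and> osum f ps = Some s \<longrightarrow> \<rho> s = sum_list (map \<rho> ps))"

text \<open>PR-states: P (as, al) = P(al_1 ... al_k | as_1 ... as_k).\<close>
definition is_PR :: "nat \<Rightarrow> (nat \<Rightarrow> 'o set) \<Rightarrow> nat \<Rightarrow> (nat list \<times> 'o list \<Rightarrow> real) \<Rightarrow> bool" where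
  "is_PR N U k P \<longleftrightarrow>
     (\<forall>x\<in>IO N U k. 0 \<le> P x) \<and>
     (\<forall>as\<in>inputs N k. (\<Sum>al\<in>outs U as. P (as, al)) = 1) \<and>
     (\<forall>i<k. \<forall>as\<in>inputs N k. \<forall>b\<in>{1..N}. \<forall>al. length al = k \<and>
         (\<forall>j<k. j \<noteq> i \<longrightarrow> al ! j \<in> U (as ! j)) \<longrightarrow>
         (\<Sum>\<alpha>\<in>U (as ! i). P (as, al[i := \<alpha>])) = (\<Sum>\<beta>\<in>U b. P (as[i := b], al[i := \<beta>])))"

definition PofS :: "nat \<Rightarrow> (nat \<Rightarrow> 'o set) \<Rightarrow> nat \<Rightarrow> ((nat \<Rightarrow> 'o) list set \<Rightarrow> real)
    \<Rightarrow> (nat list \<times> 'o list \<Rightarrow> real)" where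
  "PofS N U k \<rho> = restrict (\<lambda>(as, al). \<rho> (box N U as al)) (IO N U k)"

definition States :: "nat \<Rightarrow> (nat \<Rightarrow> 'o set) \<Rightarrow> nat \<Rightarrow> ((nat \<Rightarrow> 'o) list set \<Rightarrow> real) set" where
  "States N U k = {\<rho> \<in> extensional (Ek N U k). is_state (Ek N U k) (oplusk N U k) (gamk N U k) \<rho>}"

definition PRStates :: "nat \<Rightarrow> (nat \<Rightarrow> 'o set) \<Rightarrow> nat \<Rightarrow> (nat list \<times> 'o list \<Rightarrow> real) set" where
  "PRStates N U k = {P \<in> extensional (IO N U k). is_PR N U k P}"

end

theory Submission
  imports Defs
begin


lemma IO_len: "(as, al) \<in> IO N U k \<Longrightarrow> length as = k \<and> length al = k"
  by (auto simp: IO_def inputs_def outs_def)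

lemma box_sub: "(as, al) \<in> IO N U k \<Longrightarrow> box N U as al \<subseteq> gamk N U k"
  by (auto simp: box_def gamk_def IO_def inputs_def cyl_def cylset_def in_set_conv_nth)

lemma box_disj:
  assumes "length al1 = length as" "length al2 = length as" "al1 \<noteq> al2"
  shows "box N U as al1 \<inter> box N U as al2 = {}"
proof -
  obtain i where i: "i < length as" "al1 ! i \<noteq> al2 ! i"
    using assms nth_equalityI by metis
  show ?thesis using i by (auto simp: box_def cyl_def cylset_def)
qed

lemma box_cover:
  assumes "as \<in> inputs N k" "xs \<in> gamk N U k"
  shows "\<exists>al\<in>outs U as. xs \<in> box N U as al"
proof -
  let ?al = "map (\<lambda>i. (xs!i) (as!i)) [0..<k]"
  have xi: "\<And>i. i < k \<Longrightarrow> xs ! i \<in> gam N U" using assms(2) by (auto simp: gamk_def)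
  have ai: "\<And>i. i < k \<Longrightarrow> as ! i \<in> {1..N}" using assms(1) by (auto simp: inputs_def)
  have "?al \<in> outs U as" using xi ai assms(1)
    by (auto simp: outs_def inputs_def gam_def PiE_def Pi_def)
  moreover have "xs \<in> box N U as ?al" using xi assms
    by (auto simp: box_def inputs_def gamk_def cyl_def cylset_def)
  ultimately show ?thesis by blast
qed

lemma gamk_Union: "as \<in> inputs N k \<Longrightarrow> gamk N U k = (\<Union>al\<in>outs U as. box N U as al)"
  using box_cover[of as N k _ U] box_sub[of as _ N U k] by (auto simp: IO_def)

lemma dec_empty: "decomposable N U k {}"
  unfolding decomposable_def by (rule exI[of _ "{}"]) auto

lemma dec_union:
  assumes "decomposable N U k A" "decomposable N U k B" "A \<inter> B = {}"
  shows "decomposable N U k (A \<union> B)"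
proof -
  obtain FA where FA: "FA \<subseteq> Ak N U k" "pairwise disjnt FA" "\<Union>FA = A" using assms(1) by (auto simp: decomposable_def)
  obtain FB where FB: "FB \<subseteq> Ak N U k" "pairwise disjnt FB" "\<Union>FB = B" using assms(2) by (auto simp: decomposable_def)
  have "pairwise disjnt (FA \<union> FB)" unfolding pairwise_def
  proof (intro ballI impI)
    fix X Y assume X: "X \<in> FA \<union> FB" "Y \<in> FA \<union> FB" "X \<noteq> Y"
    have sA: "Z \<subseteq> A" if "Z \<in> FA" for Z using that FA(3) by blast
    have sB: "Z \<subseteq> B" if "Z \<in> FB" for Z using that FB(3) by blast
    show "disjnt X Y"
    proof (cases "X \<in> FA")
      case True
      show ?thesis
      proof (cases "Y \<in> FA")
        case True
        then show ?thesis using \<open>X \<in> FA\<close> X(3) FA(2) unfolding pairwise_def by blast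
      next
        case False
        then have "Y \<in> FB" using X(2) by blast
        then show ?thesis using sA[OF \<open>X \<in> FA\<close>] sB assms(3) unfolding disjnt_def by blast
      qed
    next
      case False
      then have XB: "X \<in> FB" using X(1) by blast
      show ?thesis
      proof (cases "Y \<in> FA")
        case True
        then show ?thesis using sA sB[OF XB] assms(3) unfolding disjnt_def by blast
      next
        case False
        then have "Y \<in> FB" using X(2) by blast
        then show ?thesis using XB X(3) FB(2) unfolding pairwise_def by blast
      qed
    qed
  qed
  then show ?thesis unfolding decomposable_def using FA FB by (intro exI[of _ "FA \<union> FB"]) auto
qed

lemma dec_fam:
  assumes "as \<in> inputs N k" "S \<subseteq> outs U as"
  shows "decomposable N U k (\<Union>al\<in>S. box N U as al)"
proof -
  have "box N U as ` S \<subseteq> Ak N U k" using assms by (auto simp: Ak_def IO_def)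
  moreover have "pairwise disjnt (box N U as ` S)"
    unfolding pairwise_def disjnt_def
  proof (intro ballI impI)
    fix X Y assume "X \<in> box N U as ` S" "Y \<in> box N U as ` S" "X \<noteq> Y"
    then obtain al1 al2 where "al1 \<in> S" "al2 \<in> S" "X = box N U as al1" "Y = box N U as al2" "al1 \<noteq> al2" by auto
    then show "X \<inter> Y = {}" using box_disj[of al1 as al2 N U] assms by (auto simp: outs_def)
  qed
  ultimately show ?thesis unfolding decomposable_def by (intro exI[of _ "box N U as ` S"]) auto
qed

lemma rep_inputs: "N \<ge> 1 \<Longrightarrow> replicate k 1 \<in> inputs N k"
  by (auto simp: inputs_def)

lemma dec_gamk: "N \<ge> 1 \<Longrightarrow> decomposable N U k (gamk N U k)"
proof -
  assume N: "N \<ge> 1"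
  have r: "replicate k 1 \<in> inputs N k" using rep_inputs[OF N] .
  show ?thesis using gamk_Union[OF r, of U] dec_fam[OF r, of "outs U (replicate k 1)" U] by auto
qed

lemma Ak_sub_Ek: "Ak N U k \<subseteq> Ek N U k"
proof
  fix X assume "X \<in> Ak N U k"
  then obtain as al where X: "X = box N U as al" "(as, al) \<in> IO N U k" by (auto simp: Ak_def)
  have as: "as \<in> inputs N k" and al: "al \<in> outs U as" using X by (auto simp: IO_def)
  have "gamk N U k - X = (\<Union>al'\<in>outs U as - {al}. box N U as al')"
  proof -
    have D: "box N U as al' \<inter> box N U as al = {}" if "al' \<in> outs U as" "al' \<noteq> al" for al'
      using that al box_disj[of al' as al N U] by (auto simp: outs_def)
    have G: "gamk N U k = (\<Union>al\<in>outs U as. box N U as al)" by (rule gamk_Union[OF as])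
    show ?thesis
    proof (intro equalityI subsetI)
      fix x assume x: "x \<in> gamk N U k - X"
      then obtain al' where "al' \<in> outs U as" "x \<in> box N U as al'" using G by blast
      moreover have "al' \<noteq> al" using x X(1) calculation(2) by blast
      ultimately show "x \<in> (\<Union>al'\<in>outs U as - {al}. box N U as al')" by blast
    next
      fix x assume "x \<in> (\<Union>al'\<in>outs U as - {al}. box N U as al')"
      then obtain al' where a: "al' \<in> outs U as" "al' \<noteq> al" "x \<in> box N U as al'" by blast
      have "x \<in> gamk N U k" using G a by blast
      moreover have "x \<notin> X" using D[OF a(1,2)] a(3) X(1) by blast
      ultimately show "x \<in> gamk N U k - X" by blast
    qed
  qed
  moreover have "decomposable N U k (\<Union>al'\<in>outs U as - {al}. box N U as al')"
    by (rule dec_fam[OF as]) auto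
  moreover have "decomposable N U k X" unfolding decomposable_def
    using \<open>X \<in> Ak N U k\<close> by (intro exI[of _ "{X}"]) auto
  ultimately show "X \<in> Ek N U k" using box_sub[OF X(2)] X by (auto simp: Ek_def)
qed

lemma Ek_sub: "p \<in> Ek N U k \<Longrightarrow> p \<subseteq> gamk N U k" by (auto simp: Ek_def)

lemma empty_Ek: "N \<ge> 1 \<Longrightarrow> {} \<in> Ek N U k"
  by (auto simp: Ek_def dec_empty dec_gamk)

lemma gamk_Ek: "N \<ge> 1 \<Longrightarrow> gamk N U k \<in> Ek N U k"
  by (auto simp: Ek_def dec_empty dec_gamk)

lemma oplusk_Some: "oplusk N U k p q = Some r \<longleftrightarrow> p \<inter> q = {} \<and> decomposable N U k (gamk N U k - (p \<union> q)) \<and> r = p \<union> q"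
  by (auto simp: oplusk_def)

lemma EA: assumes "N \<ge> 1" shows "effect_algebra (Ek N U k) (oplusk N U k) {} (gamk N U k)"
  unfolding effect_algebra_def
proof (intro conjI)
  show "{} \<in> Ek N U k" "gamk N U k \<in> Ek N U k" using assms empty_Ek gamk_Ek by auto
  show "\<forall>p\<in>Ek N U k. \<forall>q\<in>Ek N U k. \<forall>r. oplusk N U k p q = Some r \<longrightarrow> r \<in> Ek N U k"
  proof (intro ballI allI impI)
    fix p q r assume p: "p \<in> Ek N U k" and q: "q \<in> Ek N U k" and h: "oplusk N U k p q = Some r"
    have h1: "p \<inter> q = {}" "r = p \<union> q" "decomposable N U k (gamk N U k - (p \<union> q))"
      using h unfolding oplusk_Some by auto
    have "decomposable N U k p" "decomposable N U k q" "p \<subseteq> gamk N U k" "q \<subseteq> gamk N U k"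
      using p q unfolding Ek_def by auto
    then show "r \<in> Ek N U k" unfolding Ek_def using h1 dec_union[of N U k p q] by auto
  qed
  show "\<forall>p\<in>Ek N U k. \<forall>q\<in>Ek N U k. \<forall>r. oplusk N U k p q = Some r \<longrightarrow> oplusk N U k q p = Some r"
  proof (intro ballI allI impI)
    fix p q r assume h: "oplusk N U k p q = Some r"
    have e: "q \<union> p = p \<union> q" "q \<inter> p = p \<inter> q" by auto
    show "oplusk N U k q p = Some r" using h unfolding oplusk_def e by simp
  qed
  show "\<forall>p\<in>Ek N U k. \<forall>q\<in>Ek N U k. \<forall>r\<in>Ek N U k. \<forall>s t. oplusk N U k q r = Some s \<and> oplusk N U k p s = Some t \<longrightarrow>
         (\<exists>u. oplusk N U k p q = Some u \<and> oplusk N U k u r = Some t)"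
  proof (intro ballI allI impI)
    fix p q r s t assume E: "p \<in> Ek N U k" "q \<in> Ek N U k" "r \<in> Ek N U k"
      and h: "oplusk N U k q r = Some s \<and> oplusk N U k p s = Some t"
    have h1: "q \<inter> r = {}" "s = q \<union> r" "p \<inter> s = {}" "t = p \<union> s"
      and d: "decomposable N U k (gamk N U k - (p \<union> s))" using h by (auto simp: oplusk_Some)
    have "gamk N U k - (p \<union> q) = (gamk N U k - (p \<union> s)) \<union> r"
      using h1 Ek_sub[OF E(3)] by auto
    moreover have "decomposable N U k r" using E(3) by (auto simp: Ek_def)
    ultimately have "decomposable N U k (gamk N U k - (p \<union> q))"
      using dec_union[OF d] h1 by auto
    then show "\<exists>u. oplusk N U k p q = Some u \<and> oplusk N U k u r = Some t"
      using h1 d by (auto simp: oplusk_Some Un_assoc)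
  qed
  show "\<forall>p\<in>Ek N U k. \<exists>!q. q \<in> Ek N U k \<and> oplusk N U k p q = Some (gamk N U k)"
  proof
    fix p assume p: "p \<in> Ek N U k"
    have g: "gamk N U k - p \<in> Ek N U k" using p by (auto simp: Ek_def double_diff)
    have "oplusk N U k p (gamk N U k - p) = Some (gamk N U k)"
    proof -
      have e: "p \<union> (gamk N U k - p) = gamk N U k" using Ek_sub[OF p] by auto
      show ?thesis unfolding oplusk_Some e using dec_empty[of N U k] by auto
    qed
    moreover have "\<And>q. q \<in> Ek N U k \<Longrightarrow> oplusk N U k p q = Some (gamk N U k) \<Longrightarrow> q = gamk N U k - p"
      by (auto simp: oplusk_Some Ek_def)
    ultimately show "\<exists>!q. q \<in> Ek N U k \<and> oplusk N U k p q = Some (gamk N U k)" using g by blast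
  qed
  show "\<forall>p\<in>Ek N U k. oplusk N U k p (gamk N U k) \<noteq> None \<longrightarrow> p = {}"
    by (auto simp: oplusk_def Ek_def)
qed



lemma cyl_iff: "\<gamma> \<in> cyl N U a \<alpha> \<longleftrightarrow> \<gamma> \<in> gam N U \<and> \<gamma> a = \<alpha>"
  by (auto simp: cyl_def cylset_def)

lemma box_iff: "xs \<in> box N U as al \<longleftrightarrow> length xs = length as \<and> (\<forall>i<length as. xs ! i \<in> gam N U \<and> (xs ! i) (as ! i) = al ! i)"
  by (auto simp: box_def cyl_iff)

lemma Ak_sub_gamk: "X \<in> Ak N U k \<Longrightarrow> X \<subseteq> gamk N U k"
  using box_sub by (fastforce simp: Ak_def)

lemma dec_Ak: "X \<in> Ak N U k \<Longrightarrow> decomposable N U k X"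
  unfolding decomposable_def by (intro exI[of _ "{X}"]) auto

fun disjl :: "'a set list \<Rightarrow> bool" where
  "disjl [] = True"
| "disjl (p # ps) = (p \<inter> \<Union>(set ps) = {} \<and> disjl ps)"

lemma osum_ok:
  "ps \<noteq> [] \<Longrightarrow> set ps \<subseteq> Ak N U k \<Longrightarrow> disjl ps \<Longrightarrow> decomposable N U k (gamk N U k - \<Union>(set ps))
   \<Longrightarrow> osum (oplusk N U k) ps = Some (\<Union>(set ps))"
proof (induction "oplusk N U k" ps rule: osum.induct)
  case (3 p q ps)
  have pA: "p \<in> Ak N U k" using 3 by auto
  have e: "gamk N U k - \<Union>(set (q # ps)) = (gamk N U k - \<Union>(set (p # q # ps))) \<union> p"
    using Ak_sub_gamk[OF pA] 3(4) 3(5) by auto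
  have "decomposable N U k (gamk N U k - \<Union>(set (q # ps)))"
    unfolding e by (rule dec_union) (use 3 dec_Ak[OF pA] in auto)
  then have o: "osum (oplusk N U k) (q # ps) = Some (\<Union>(set (q # ps)))" using 3 by auto
  have d: "p \<inter> \<Union>(set (q # ps)) = {}" using 3(4) by simp
  have "oplusk N U k p (\<Union>(set (q # ps))) = Some (\<Union>(set (p # q # ps)))"
    unfolding oplusk_Some using d 3(5) by (simp only: set_simps Union_insert)
  then show ?case using o by simp
qed auto

lemma state_zero:
  assumes "N \<ge> 1" "is_state (Ek N U k) (oplusk N U k) (gamk N U k) \<rho>"
  shows "\<rho> {} = 0"
proof -
  have "oplusk N U k {} (gamk N U k) = Some (gamk N U k)"
    using dec_empty[of N U k] by (simp add: oplusk_Some)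
  then have "osum (oplusk N U k) [{}, gamk N U k] = Some (gamk N U k)" by simp
  moreover have st: "\<And>ps s. ps \<noteq> [] \<Longrightarrow> set ps \<subseteq> Ek N U k \<Longrightarrow> osum (oplusk N U k) ps = Some s \<Longrightarrow> \<rho> s = sum_list (map \<rho> ps)"
    using assms(2) unfolding is_state_def by blast
  moreover have "set [{}, gamk N U k] \<subseteq> Ek N U k" using assms(1) empty_Ek gamk_Ek by auto
  ultimately have "\<rho> (gamk N U k) = sum_list (map \<rho> [{}, gamk N U k])" by blast
  then show ?thesis by simp
qed

lemma disjl_map: "distinct xs \<Longrightarrow> \<forall>\<alpha>\<in>set xs. \<forall>\<beta>\<in>set xs. \<alpha> \<noteq> \<beta> \<longrightarrow> B \<alpha> \<inter> B \<beta> = {} \<Longrightarrow> disjl (map B xs)"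
  by (induction xs) auto

lemma state_sum:
  assumes "N \<ge> 1" "is_state (Ek N U k) (oplusk N U k) (gamk N U k) \<rho>" "finite A"
    "\<forall>\<alpha>\<in>A. B \<alpha> \<in> Ak N U k" "\<forall>\<alpha>\<in>A. \<forall>\<beta>\<in>A. \<alpha> \<noteq> \<beta> \<longrightarrow> B \<alpha> \<inter> B \<beta> = {}"
    "decomposable N U k (gamk N U k - \<Union>(B ` A))"
  shows "\<rho> (\<Union>(B ` A)) = (\<Sum>\<alpha>\<in>A. \<rho> (B \<alpha>))"
proof (cases "A = {}")
  case True then show ?thesis using state_zero[OF assms(1,2)] by simp
next
  case False
  obtain xs where xs: "distinct xs" "set xs = A" using finite_distinct_list[OF assms(3)] by blast
  have "osum (oplusk N U k) (map B xs) = Some (\<Union>(set (map B xs)))"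
    by (rule osum_ok) (use xs False assms(4,5,6) disjl_map[OF xs(1), of B] in auto)
  moreover have "set (map B xs) \<subseteq> Ek N U k" using xs assms(4) Ak_sub_Ek[of N U k] by auto
  moreover have "map B xs \<noteq> []" using xs False by auto
  moreover have st: "\<And>ps s. ps \<noteq> [] \<Longrightarrow> set ps \<subseteq> Ek N U k \<Longrightarrow> osum (oplusk N U k) ps = Some s \<Longrightarrow> \<rho> s = sum_list (map \<rho> ps)"
    using assms(2) unfolding is_state_def by blast
  ultimately have "\<rho> (\<Union>(set (map B xs))) = sum_list (map \<rho> (map B xs))" by blast
  then have "\<rho> (\<Union>(B ` A)) = sum_list (map \<rho> (map B xs))" using xs by simp
  also have "\<dots> = (\<Sum>\<alpha>\<in>A. \<rho> (B \<alpha>))"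
    using xs by (simp add: sum_list_distinct_conv_sum_set o_def)
  finally show ?thesis .
qed

lemma gam_finite: "\<forall>a\<in>{1..N}. finite (U a) \<Longrightarrow> finite (gam N U)"
  by (auto simp: gam_def intro!: finite_PiE)

lemma gamk_finite: "\<forall>a\<in>{1..N}. finite (U a) \<Longrightarrow> finite (gamk N U k)"
proof -
  assume f: "\<forall>a\<in>{1..N}. finite (U a)"
  have "gamk N U k \<subseteq> {xs. set xs \<subseteq> gam N U \<and> length xs = k}" by (auto simp: gamk_def)
  then show ?thesis using finite_lists_length_eq[OF gam_finite[OF f]] finite_subset by blast
qed

lemma state_decomp:
  assumes "N \<ge> 1" "\<forall>a\<in>{1..N}. finite (U a)" "is_state (Ek N U k) (oplusk N U k) (gamk N U k) \<rho>"
    "p \<in> Ek N U k" "F \<subseteq> Ak N U k" "pairwise disjnt F" "\<Union>F = p"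
  shows "\<rho> p = (\<Sum>q\<in>F. \<rho> q)"
proof -
  have "finite F" using assms(5) Ak_sub_gamk gamk_finite[OF assms(2)]
    by (meson Pow_iff finite_Pow_iff finite_subset subsetI subset_iff)
  have "\<rho> (\<Union>(id ` F)) = (\<Sum>q\<in>F. \<rho> (id q))"
    by (rule state_sum[OF assms(1,3) \<open>finite F\<close>])
      (use assms(4-7) in \<open>auto simp: pairwise_def disjnt_def Ek_def\<close>)
  then show ?thesis using assms(7) by simp
qed

lemma outs_finite: "as \<in> inputs N k \<Longrightarrow> \<forall>a\<in>{1..N}. finite (U a) \<Longrightarrow> finite (outs U as)"
proof -
  assume as: "as \<in> inputs N k" and f: "\<forall>a\<in>{1..N}. finite (U a)"
  have "outs U as \<subseteq> {xs. set xs \<subseteq> \<Union>(U ` {1..N}) \<and> length xs = length as}"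
    using as apply (auto simp: outs_def inputs_def in_set_conv_nth)
    by (metis One_nat_def atLeastAtMost_iff)
  moreover have "finite (\<Union>(U ` {1..N}))" using f by auto
  ultimately show ?thesis using finite_lists_length_eq finite_subset by blast
qed

lemma PofS_IO: "(as, al) \<in> IO N U k \<Longrightarrow> PofS N U k \<rho> (as, al) = \<rho> (box N U as al)"
  by (auto simp: PofS_def)

lemma box_Ak: "(as, al) \<in> IO N U k \<Longrightarrow> box N U as al \<in> Ak N U k"
  by (auto simp: Ak_def)

definition Cset where
  "Cset N U k i as al = {xs \<in> gamk N U k. \<forall>j<k. j \<noteq> i \<longrightarrow> xs ! j \<in> cyl N U (as ! j) (al ! j)}"

lemma C_sum:
  assumes "N \<ge> 1" "\<forall>a\<in>{1..N}. finite (U a)" "is_state (Ek N U k) (oplusk N U k) (gamk N U k) \<rho>"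
    "i < k" "as \<in> inputs N k" "length al = k" "\<forall>j<k. j \<noteq> i \<longrightarrow> al ! j \<in> U (as ! j)"
  shows "\<rho> (Cset N U k i as al) = (\<Sum>\<alpha>\<in>U (as ! i). \<rho> (box N U as (al[i := \<alpha>])))"
proof -
  have asi: "as ! i \<in> {1..N}" and las: "length as = k" using assms(4,5) by (auto simp: inputs_def)
  have IOa: "(as, al[i := \<alpha>]) \<in> IO N U k" if "\<alpha> \<in> U (as ! i)" for \<alpha>
    using that assms(4,5,6,7) by (auto simp: IO_def outs_def inputs_def nth_list_update)
  have U1: "(\<Union>\<alpha>\<in>U (as ! i). box N U as (al[i := \<alpha>])) = Cset N U k i as al"
  proof (intro equalityI subsetI)
    fix xs assume "xs \<in> (\<Union>\<alpha>\<in>U (as ! i). box N U as (al[i := \<alpha>]))"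
    then obtain \<alpha> where a: "\<alpha> \<in> U (as ! i)" "xs \<in> box N U as (al[i := \<alpha>])" by auto
    then show "xs \<in> Cset N U k i as al" using box_sub[OF IOa[OF a(1)]]
      by (auto simp: Cset_def box_iff cyl_iff las)
  next
    fix xs assume xs: "xs \<in> Cset N U k i as al"
    then have g: "xs ! i \<in> gam N U" and lx: "length xs = k" using assms(4) by (auto simp: Cset_def gamk_def)
    have "(xs ! i) (as ! i) \<in> U (as ! i)" using g asi by (auto simp: gam_def PiE_def Pi_def)
    moreover have "xs \<in> box N U as (al[i := (xs ! i) (as ! i)])"
      using xs g lx las assms(4,6) by (auto simp: Cset_def box_iff cyl_iff nth_list_update)
    ultimately show "xs \<in> (\<Union>\<alpha>\<in>U (as ! i). box N U as (al[i := \<alpha>]))" by blast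
  qed
  define S where "S = {al' \<in> outs U as. \<exists>j<k. j \<noteq> i \<and> al' ! j \<noteq> al ! j}"
  have U2: "gamk N U k - Cset N U k i as al = (\<Union>al'\<in>S. box N U as al')"
  proof (intro equalityI subsetI)
    fix xs assume xs: "xs \<in> gamk N U k - Cset N U k i as al"
    then obtain j where j: "j < k" "j \<noteq> i" "xs ! j \<notin> cyl N U (as ! j) (al ! j)" by (auto simp: Cset_def)
    obtain al' where al': "al' \<in> outs U as" "xs \<in> box N U as al'" using box_cover[OF assms(5)] xs by blast
    then have "al' ! j \<noteq> al ! j" using j las by (auto simp: box_def)
    then show "xs \<in> (\<Union>al'\<in>S. box N U as al')" using al' j S_def by auto
  next
    fix xs assume "xs \<in> (\<Union>al'\<in>S. box N U as al')"
    then obtain al' j where al': "al' \<in> outs U as" "xs \<in> box N U as al'" "j < k" "j \<noteq> i" "al' ! j \<noteq> al ! j"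
      by (auto simp: S_def)
    then have "xs \<in> gamk N U k" using box_sub[of as al' N U k] assms(5) by (auto simp: IO_def)
    moreover have "xs \<notin> Cset N U k i as al" using al' las by (auto simp: Cset_def box_iff cyl_iff)
    ultimately show "xs \<in> gamk N U k - Cset N U k i as al" by blast
  qed
  have "\<rho> (\<Union>\<alpha>\<in>U (as ! i). box N U as (al[i := \<alpha>])) = (\<Sum>\<alpha>\<in>U (as ! i). \<rho> (box N U as (al[i := \<alpha>])))"
  proof (rule state_sum[OF assms(1,3)])
    show "finite (U (as ! i))" using assms(2) asi by auto
    show "\<forall>\<alpha>\<in>U (as ! i). box N U as (al[i := \<alpha>]) \<in> Ak N U k" using IOa box_Ak by blast
    show "\<forall>\<alpha>\<in>U (as ! i). \<forall>\<beta>\<in>U (as ! i). \<alpha> \<noteq> \<beta> \<longrightarrow> box N U as (al[i := \<alpha>]) \<inter> box N U as (al[i := \<beta>]) = {}"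
    proof (intro ballI impI)
      fix \<alpha> \<beta> assume "\<alpha> \<in> U (as ! i)" "\<beta> \<in> U (as ! i)" "\<alpha> \<noteq> \<beta>"
      then have "al[i := \<alpha>] \<noteq> al[i := \<beta>]" using assms(4,6) by (metis nth_list_update_eq)
      then show "box N U as (al[i := \<alpha>]) \<inter> box N U as (al[i := \<beta>]) = {}"
        by (rule box_disj[rotated 2]) (use las assms(6) in auto)
    qed
    show "decomposable N U k (gamk N U k - (\<Union>\<alpha>\<in>U (as ! i). box N U as (al[i := \<alpha>])))"
      unfolding U1 U2 by (rule dec_fam[OF assms(5)]) (auto simp: S_def)
  qed
  then show ?thesis using U1 by simp
qed

lemma state_PR:
  assumes "N \<ge> 1" "\<forall>a\<in>{1..N}. finite (U a)" "is_state (Ek N U k) (oplusk N U k) (gamk N U k) \<rho>"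
  shows "is_PR N U k (PofS N U k \<rho>)"
  unfolding is_PR_def
proof (intro conjI ballI allI impI)
  fix x assume x: "x \<in> IO N U k"
  obtain as al where x2: "x = (as, al)" by force
  have "box N U as al \<in> Ek N U k" using box_Ak Ak_sub_Ek x x2
    by (metis subsetD)
  then show "0 \<le> PofS N U k \<rho> x" using assms(3) x x2 PofS_IO[of as al N U k \<rho>] by (auto simp: is_state_def)
next
  fix as assume as: "as \<in> inputs N k"
  have "(\<Sum>al\<in>outs U as. PofS N U k \<rho> (as, al)) = (\<Sum>al\<in>outs U as. \<rho> (box N U as al))"
    using as by (intro sum.cong) (auto simp: PofS_def IO_def)
  also have "\<dots> = \<rho> (\<Union>al\<in>outs U as. box N U as al)"
  proof (rule state_sum[OF assms(1,3), symmetric])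
    show "finite (outs U as)" using outs_finite[OF as assms(2)] .
    show "\<forall>\<alpha>\<in>outs U as. box N U as \<alpha> \<in> Ak N U k" using as by (auto simp: Ak_def IO_def)
    show "\<forall>\<alpha>\<in>outs U as. \<forall>\<beta>\<in>outs U as. \<alpha> \<noteq> \<beta> \<longrightarrow> box N U as \<alpha> \<inter> box N U as \<beta> = {}"
    proof (intro ballI impI)
      fix a b assume "a \<in> outs U as" "b \<in> outs U as" "a \<noteq> b"
      then show "box N U as a \<inter> box N U as b = {}" using box_disj[of a as b N U] by (auto simp: outs_def)
    qed
    show "decomposable N U k (gamk N U k - \<Union>(box N U as ` outs U as))"
      using gamk_Union[OF as, of U] dec_empty by simp
  qed
  also have "\<dots> = 1" using gamk_Union[OF as, of U] assms(3) by (simp add: is_state_def)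
  finally show "(\<Sum>al\<in>outs U as. PofS N U k \<rho> (as, al)) = 1" .
next
  fix i as b al assume i: "i < k" and as: "as \<in> inputs N k" and b: "b \<in> {1..N}"
    and al: "length al = k \<and> (\<forall>j<k. j \<noteq> i \<longrightarrow> al ! j \<in> U (as ! j))"
  have las: "length as = k" using as by (auto simp: inputs_def)
  have as': "as[i := b] \<in> inputs N k" using as b i by (auto simp: inputs_def nth_list_update)
  have al': "\<forall>j<k. j \<noteq> i \<longrightarrow> al ! j \<in> U (as[i := b] ! j)" using al by auto
  have CC: "Cset N U k i (as[i := b]) al = Cset N U k i as al" by (auto simp: Cset_def)
  have "(\<Sum>\<alpha>\<in>U (as ! i). PofS N U k \<rho> (as, al[i := \<alpha>])) = (\<Sum>\<alpha>\<in>U (as ! i). \<rho> (box N U as (al[i := \<alpha>])))"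
    using as al i by (intro sum.cong) (auto simp: PofS_def IO_def outs_def inputs_def nth_list_update)
  also have "\<dots> = \<rho> (Cset N U k i as al)" using C_sum[OF assms i as] al by simp
  also have "\<dots> = \<rho> (Cset N U k i (as[i := b]) al)" using CC by simp
  also have "\<dots> = (\<Sum>\<beta>\<in>U (as[i := b] ! i). \<rho> (box N U (as[i := b]) (al[i := \<beta>])))"
    using C_sum[OF assms i as'] al al' by simp
  also have "\<dots> = (\<Sum>\<beta>\<in>U b. PofS N U k \<rho> (as[i := b], al[i := \<beta>]))"
    using as' al i las b by (intro sum.cong) (auto simp: PofS_def IO_def outs_def inputs_def nth_list_update)
  finally show "(\<Sum>\<alpha>\<in>U (as ! i). PofS N U k \<rho> (as, al[i := \<alpha>])) = (\<Sum>\<beta>\<in>U b. PofS N U k \<rho> (as[i := b], al[i := \<beta>]))" .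
qed



lemma fiber_sum:
  fixes f :: "'o \<Rightarrow> real"
  assumes "finite I" "a \<in> I" "\<forall>i\<in>I. finite (V i)"
  shows "(\<Sum>\<gamma>\<in>PiE I V. f (\<gamma> a)) = real (\<Prod>i\<in>I-{a}. card (V i)) * (\<Sum>\<alpha>\<in>V a. f \<alpha>)"
proof -
  have I: "I = insert a (I - {a})" using assms(2) by auto
  have P: "PiE I V = (\<lambda>(y, g). g(a := y)) ` (V a \<times> PiE (I - {a}) V)"
    by (subst I) (rule PiE_insert_eq)
  have inj: "inj_on (\<lambda>(y, g). g(a := y)) (V a \<times> PiE (I - {a}) V)"
    by (rule inj_combinator) simp
  let ?h = "\<lambda>(y, g). g(a := y)"
  let ?B = "PiE (I - {a}) V"
  have s1: "(\<Sum>\<gamma>\<in>PiE I V. f (\<gamma> a)) = (\<Sum>\<gamma>\<in>?h ` (V a \<times> ?B). f (\<gamma> a))"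
    by (rule arg_cong[where f="\<lambda>S. \<Sum>\<gamma>\<in>S. f (\<gamma> a)"]) (rule P)
  have s2: "(\<Sum>\<gamma>\<in>?h ` (V a \<times> ?B). f (\<gamma> a)) = (\<Sum>p\<in>V a \<times> ?B. f ((?h p) a))"
    using sum.reindex[OF inj, of "\<lambda>\<gamma>. f (\<gamma> a)"] by (simp only: o_def)
  have s3: "(\<Sum>p\<in>V a \<times> ?B. f ((?h p) a)) = (\<Sum>(y, g)\<in>V a \<times> ?B. f y)"
    by (rule sum.cong[OF refl]) (auto split: prod.splits)
  have s4: "(\<Sum>(y, g)\<in>V a \<times> ?B. f y) = (\<Sum>y\<in>V a. \<Sum>g\<in>?B. f y)"
    by (rule sum.cartesian_product[symmetric])
  have s5: "(\<Sum>y\<in>V a. \<Sum>g\<in>?B. f y) = (\<Sum>y\<in>V a. real (card ?B) * f y)"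
    by (simp only: sum_constant)
  have cP: "card ?B = (\<Prod>i\<in>I-{a}. card (V i))"
    using assms(1) by (intro card_PiE) simp
  have s6: "(\<Sum>y\<in>V a. real (card ?B) * f y) = real (card ?B) * (\<Sum>\<alpha>\<in>V a. f \<alpha>)"
    by (simp only: sum_distrib_left)
  have s7: "real (card ?B) * (\<Sum>\<alpha>\<in>V a. f \<alpha>) = real (\<Prod>i\<in>I-{a}. card (V i)) * (\<Sum>\<alpha>\<in>V a. f \<alpha>)"
    by (simp only: cP)
  show ?thesis using trans[OF s1 trans[OF s2 trans[OF s3 trans[OF s4 trans[OF s5 trans[OF s6 s7]]]]]] .
qed

definition Kw :: "nat \<Rightarrow> (nat \<Rightarrow> 'o set) \<Rightarrow> (nat \<Rightarrow> 'o) \<Rightarrow> nat \<Rightarrow> 'o \<Rightarrow> real" where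
  "Kw N U \<gamma> a \<alpha> = ((if \<gamma> a = \<alpha> then real (card (U a)) else 0) - (if a = 1 then real N - 1 else 0)) / real (card (gam N U))"

lemma cyl_PiE: "b \<in> {1..N} \<Longrightarrow> \<beta> \<in> U b \<Longrightarrow> cyl N U b \<beta> = PiE {1..N} (U(b := {\<beta>}))"
proof -
  assume b: "b \<in> {1..N}" and be: "\<beta> \<in> U b"
  show ?thesis
  proof (intro equalityI subsetI)
    fix \<gamma> assume "\<gamma> \<in> cyl N U b \<beta>"
    then have g: "\<gamma> \<in> PiE {1..N} U" "\<gamma> b = \<beta>" by (auto simp: cyl_iff gam_def)
    then show "\<gamma> \<in> PiE {1..N} (U(b := {\<beta>}))" unfolding PiE_iff by auto
  next
    fix \<gamma> assume g: "\<gamma> \<in> PiE {1..N} (U(b := {\<beta>}))"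
    then have "\<gamma> b = \<beta>" using b unfolding PiE_iff by (metis fun_upd_same singletonD)
    moreover have "\<gamma> \<in> PiE {1..N} U" using g be unfolding PiE_iff
      by (metis fun_upd_apply singletonD)
    ultimately show "\<gamma> \<in> cyl N U b \<beta>" by (auto simp: cyl_iff gam_def)
  qed
qed

lemma single:
  fixes \<phi> :: "nat \<Rightarrow> 'o \<Rightarrow> real"
  assumes N: "N \<ge> 1" and fin: "\<forall>a\<in>{1..N}. finite (U a) \<and> U a \<noteq> {}"
    and hc: "\<forall>a\<in>{1..N}. (\<Sum>\<alpha>\<in>U a. \<phi> a \<alpha>) = c" and b: "b \<in> {1..N}" and beta: "\<beta> \<in> U b"
  shows "(\<Sum>\<gamma>\<in>cyl N U b \<beta>. \<Sum>a\<in>{1..N}. \<Sum>\<alpha>\<in>U a. Kw N U \<gamma> a \<alpha> * \<phi> a \<alpha>) = \<phi> b \<beta>"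
proof -
  define I where "I = {1..N::nat}"
  define g where "g = real (card (gam N U))"
  define V where "V = U(b := {\<beta>})"
  define R where "R = real (\<Prod>i\<in>I-{b}. card (U i))"
  have Ifin: "finite I" by (simp add: I_def)
  have one: "1 \<in> I" using N by (simp add: I_def)
  have bI: "b \<in> I" using b by (simp add: I_def)
  have cU: "\<And>a. a \<in> I \<Longrightarrow> real (card (U a)) > 0" using fin by (auto simp: I_def card_gt_0_iff)
  have g_eq: "g = real (card (U b)) * R"
  proof -
    have "g = real (\<Prod>i\<in>I. card (U i))" unfolding g_def gam_def I_def
      using card_PiE[of "{1..N}" U] by simp
    also have "\<dots> = real (card (U b) * (\<Prod>i\<in>I-{b}. card (U i)))"
      by (simp only: prod.remove[OF Ifin bI])
    finally show ?thesis unfolding R_def by (simp only: of_nat_mult)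
  qed
  have Rpos: "R > 0" unfolding R_def using cU by (auto intro!: prod_pos)
  have gpos: "g > 0" using g_eq cU[OF bI] Rpos by simp
  have s1: "(\<Sum>\<alpha>\<in>U a. Kw N U \<gamma> a \<alpha> * \<phi> a \<alpha>) =
      (real (card (U a)) * \<phi> a (\<gamma> a) - (if a = 1 then (real N - 1) * c else 0)) / g"
    if a: "a \<in> I" and ga: "\<gamma> a \<in> U a" for \<gamma> a
  proof -
    have "(\<Sum>\<alpha>\<in>U a. Kw N U \<gamma> a \<alpha> * \<phi> a \<alpha>) =
        ((\<Sum>\<alpha>\<in>U a. (if \<gamma> a = \<alpha> then real (card (U a)) * \<phi> a \<alpha> else 0))
          - (if a = 1 then real N - 1 else 0) * (\<Sum>\<alpha>\<in>U a. \<phi> a \<alpha>)) / g"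
    proof -
      have e1: "Kw N U \<gamma> a \<alpha> * \<phi> a \<alpha> = ((if \<gamma> a = \<alpha> then real (card (U a)) * \<phi> a \<alpha> else 0)
          - (if a = 1 then real N - 1 else 0) * \<phi> a \<alpha>) / g" for \<alpha>
        by (cases "\<gamma> a = \<alpha>") (simp_all add: Kw_def g_def left_diff_distrib)
      show ?thesis unfolding e1
        by (simp only: sum_divide_distrib[symmetric] sum_subtractf sum_distrib_left)
    qed
    also have "(\<Sum>\<alpha>\<in>U a. (if \<gamma> a = \<alpha> then real (card (U a)) * \<phi> a \<alpha> else 0)) = real (card (U a)) * \<phi> a (\<gamma> a)"
      using ga fin a by (simp add: I_def)
    finally show ?thesis using hc a by (simp add: I_def)
  qed
  have s2: "(\<Sum>a\<in>I. \<Sum>\<alpha>\<in>U a. Kw N U \<gamma> a \<alpha> * \<phi> a \<alpha>) =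
      ((\<Sum>a\<in>I. real (card (U a)) * \<phi> a (\<gamma> a)) - (real N - 1) * c) / g"
    if \<gamma>: "\<gamma> \<in> gam N U" for \<gamma>
  proof -
    have "(\<Sum>a\<in>I. \<Sum>\<alpha>\<in>U a. Kw N U \<gamma> a \<alpha> * \<phi> a \<alpha>) =
        (\<Sum>a\<in>I. (real (card (U a)) * \<phi> a (\<gamma> a) - (if a = 1 then (real N - 1) * c else 0)) / g)"
      using \<gamma> by (intro sum.cong refl s1) (auto simp: gam_def PiE_def Pi_def I_def)
    also have "\<dots> = ((\<Sum>a\<in>I. real (card (U a)) * \<phi> a (\<gamma> a)) - (\<Sum>a\<in>I. (if a = 1 then (real N - 1) * c else 0))) / g"
      by (simp add: sum_divide_distrib[symmetric] sum_subtractf)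
    also have "(\<Sum>a\<in>I. (if a = 1 then (real N - 1) * c else 0)) = (real N - 1) * c"
      using Ifin one by (simp add: sum.delta')
    finally show ?thesis .
  qed
  have cylsub: "cyl N U b \<beta> \<subseteq> gam N U" by (auto simp: cyl_iff)
  have cylP: "cyl N U b \<beta> = PiE I V" using cyl_PiE[where b=b and N=N and U=U and \<beta>=\<beta>, OF b beta] by (simp add: I_def V_def)
  have Vfin: "\<forall>i\<in>I. finite (V i)" using fin by (auto simp: V_def I_def)
  have cardV: "real (card (V a)) * real (\<Prod>i\<in>I-{a}. card (V i)) = R" if a: "a \<in> I" for a
  proof -
    have "real (card (V a)) * real (\<Prod>i\<in>I-{a}. card (V i)) = real (\<Prod>i\<in>I. card (V i))"
      by (simp only: prod.remove[OF Ifin a] of_nat_mult)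
    also have "\<dots> = real (card (V b)) * real (\<Prod>i\<in>I-{b}. card (V i))"
      by (simp only: prod.remove[OF Ifin bI] of_nat_mult)
    also have "(\<Prod>i\<in>I-{b}. card (V i)) = (\<Prod>i\<in>I-{b}. card (U i))"
      by (rule prod.cong) (auto simp: V_def)
    finally show ?thesis by (simp add: V_def R_def)
  qed
  have card_cyl: "real (card (cyl N U b \<beta>)) = R"
  proof -
    have "real (card (cyl N U b \<beta>)) = real (\<Prod>i\<in>I. card (V i))"
      unfolding cylP using card_PiE[OF Ifin, of V] by simp
    also have "\<dots> = real (card (V b)) * real (\<Prod>i\<in>I-{b}. card (V i))"
      by (simp only: prod.remove[OF Ifin bI] of_nat_mult)
    finally show ?thesis using cardV[OF bI] by simp
  qed
  have fib: "real (card (U a)) * (\<Sum>\<gamma>\<in>cyl N U b \<beta>. \<phi> a (\<gamma> a)) = (if a = b then real (card (U b)) * R * \<phi> b \<beta> else R * c)"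
    if a: "a \<in> I" for a
  proof -
    have "(\<Sum>\<gamma>\<in>cyl N U b \<beta>. \<phi> a (\<gamma> a)) = real (\<Prod>i\<in>I-{a}. card (V i)) * (\<Sum>\<alpha>\<in>V a. \<phi> a \<alpha>)"
      unfolding cylP by (rule fiber_sum[OF Ifin a Vfin])
    moreover have "real (\<Prod>i\<in>I-{b}. card (V i)) = R"
      using cardV[OF bI] by (simp add: V_def)
    ultimately show ?thesis
    proof (cases "a = b")
      case True
      assume h: "(\<Sum>\<gamma>\<in>cyl N U b \<beta>. \<phi> a (\<gamma> a)) = real (\<Prod>i\<in>I-{a}. card (V i)) * (\<Sum>\<alpha>\<in>V a. \<phi> a \<alpha>)"
        "real (\<Prod>i\<in>I-{b}. card (V i)) = R"
      have "(\<Sum>\<alpha>\<in>V a. \<phi> a \<alpha>) = \<phi> b \<beta>" using True by (simp add: V_def)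
      then show ?thesis using h True by simp
    next
      case False
      assume h: "(\<Sum>\<gamma>\<in>cyl N U b \<beta>. \<phi> a (\<gamma> a)) = real (\<Prod>i\<in>I-{a}. card (V i)) * (\<Sum>\<alpha>\<in>V a. \<phi> a \<alpha>)"
      have VU: "V a = U a" using False by (simp add: V_def)
      have "(\<Sum>\<alpha>\<in>V a. \<phi> a \<alpha>) = c" using hc a VU by (simp add: I_def)
      then have "real (card (U a)) * (\<Sum>\<gamma>\<in>cyl N U b \<beta>. \<phi> a (\<gamma> a)) = (real (card (V a)) * real (\<Prod>i\<in>I-{a}. card (V i))) * c"
        using h VU by (simp only: mult.assoc)
      then show ?thesis using cardV[OF a] False by simp
    qed
  qed
  have "(\<Sum>\<gamma>\<in>cyl N U b \<beta>. \<Sum>a\<in>I. \<Sum>\<alpha>\<in>U a. Kw N U \<gamma> a \<alpha> * \<phi> a \<alpha>) =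
      (\<Sum>\<gamma>\<in>cyl N U b \<beta>. ((\<Sum>a\<in>I. real (card (U a)) * \<phi> a (\<gamma> a)) - (real N - 1) * c) / g)"
    using cylsub by (intro sum.cong refl s2) auto
  also have "\<dots> = ((\<Sum>a\<in>I. real (card (U a)) * (\<Sum>\<gamma>\<in>cyl N U b \<beta>. \<phi> a (\<gamma> a))) - real (card (cyl N U b \<beta>)) * (real N - 1) * c) / g"
  proof -
    have sw: "(\<Sum>\<gamma>\<in>cyl N U b \<beta>. \<Sum>a\<in>I. real (card (U a)) * \<phi> a (\<gamma> a)) =
        (\<Sum>a\<in>I. real (card (U a)) * (\<Sum>\<gamma>\<in>cyl N U b \<beta>. \<phi> a (\<gamma> a)))"
      by (subst sum.swap) (simp only: sum_distrib_left)
    have "(\<Sum>\<gamma>\<in>cyl N U b \<beta>. ((\<Sum>a\<in>I. real (card (U a)) * \<phi> a (\<gamma> a)) - (real N - 1) * c) / g)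
       = ((\<Sum>\<gamma>\<in>cyl N U b \<beta>. \<Sum>a\<in>I. real (card (U a)) * \<phi> a (\<gamma> a)) - (\<Sum>\<gamma>\<in>cyl N U b \<beta>. (real N - 1) * c)) / g"
      by (simp only: sum_divide_distrib[symmetric] sum_subtractf)
    then show ?thesis unfolding sw by simp
  qed
  also have "(\<Sum>a\<in>I. real (card (U a)) * (\<Sum>\<gamma>\<in>cyl N U b \<beta>. \<phi> a (\<gamma> a))) =
      (\<Sum>a\<in>I. (if a = b then real (card (U b)) * R * \<phi> b \<beta> else R * c))"
    by (intro sum.cong refl fib)
  also have "\<dots> = real (card (U b)) * R * \<phi> b \<beta> + (real N - 1) * R * c"
  proof -
    have "(\<Sum>a\<in>I. (if a = b then real (card (U b)) * R * \<phi> b \<beta> else R * c)) =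
        real (card (U b)) * R * \<phi> b \<beta> + (\<Sum>a\<in>I-{b}. R * c)"
      using Ifin bI by (simp add: sum.remove)
    moreover have "card (I - {b}) = N - 1" using bI by (simp add: I_def)
    ultimately show ?thesis using N by (simp add: of_nat_diff)
  qed
  finally have fin1: "(\<Sum>\<gamma>\<in>cyl N U b \<beta>. \<Sum>a\<in>I. \<Sum>\<alpha>\<in>U a. Kw N U \<gamma> a \<alpha> * \<phi> a \<alpha>) =
     (real (card (U b)) * R * \<phi> b \<beta> + (real N - 1) * R * c - R * (real N - 1) * c) / g"
    unfolding card_cyl .
  have "(real (card (U b)) * R * \<phi> b \<beta> + (real N - 1) * R * c - R * (real N - 1) * c) / g
      = (real (card (U b)) * R * \<phi> b \<beta>) / g" by (simp add: algebra_simps)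
  also have "\<dots> = \<phi> b \<beta>" using g_eq cU[OF bI] Rpos by simp
  finally show ?thesis using fin1 by (simp add: I_def)
qed



fun mu :: "nat \<Rightarrow> (nat \<Rightarrow> 'o set) \<Rightarrow> (nat list \<times> 'o list \<Rightarrow> real) \<Rightarrow> (nat \<Rightarrow> 'o) list \<Rightarrow> real" where
  "mu N U Q [] = Q ([], [])"
| "mu N U Q (\<gamma> # x) = (\<Sum>a\<in>{1..N}. \<Sum>\<alpha>\<in>U a. Kw N U \<gamma> a \<alpha> * mu N U (\<lambda>(as, al). Q (a # as, \<alpha> # al)) x)"

definition NSk :: "nat \<Rightarrow> (nat \<Rightarrow> 'o set) \<Rightarrow> nat \<Rightarrow> (nat list \<times> 'o list \<Rightarrow> real) \<Rightarrow> bool" where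
  "NSk N U k Q \<longleftrightarrow> (\<forall>i<k. \<forall>as\<in>inputs N k. \<forall>b\<in>{1..N}. \<forall>al. length al = k \<and>
         (\<forall>j<k. j \<noteq> i \<longrightarrow> al ! j \<in> U (as ! j)) \<longrightarrow>
         (\<Sum>\<alpha>\<in>U (as ! i). Q (as, al[i := \<alpha>])) = (\<Sum>\<beta>\<in>U b. Q (as[i := b], al[i := \<beta>])))"

lemma PR_NS: "is_PR N U k P \<Longrightarrow> NSk N U k P"
  unfolding is_PR_def NSk_def by (elim conjE) assumption

lemma NS_D:
  assumes "NSk N U k Q" "i < k" "as \<in> inputs N k" "b \<in> {1..N}" "length al = k"
    "\<And>j. j < k \<Longrightarrow> j \<noteq> i \<Longrightarrow> al ! j \<in> U (as ! j)"
  shows "(\<Sum>\<alpha>\<in>U (as ! i). Q (as, al[i := \<alpha>])) = (\<Sum>\<beta>\<in>U b. Q (as[i := b], al[i := \<beta>]))"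
  using assms unfolding NSk_def by blast

lemma NS_cons:
  assumes "NSk N U (Suc k) Q" "a \<in> {1..N}" "\<alpha> \<in> U a"
  shows "NSk N U k (\<lambda>(as, al). Q (a # as, \<alpha> # al))"
  unfolding NSk_def
proof (intro allI impI ballI)
  fix i as b al assume i: "i < k" and as: "as \<in> inputs N k" and b: "b \<in> {1..N}"
    and al: "length al = k \<and> (\<forall>j<k. j \<noteq> i \<longrightarrow> al ! j \<in> U (as ! j))"
  have as': "a # as \<in> inputs N (Suc k)" using as assms(2) by (auto simp: inputs_def nth_Cons split: nat.splits)
  have al': "(\<alpha> # al) ! j \<in> U ((a # as) ! j)" if "j < Suc k" "j \<noteq> Suc i" for j
  proof (cases j)
    case 0 then show ?thesis using assms(3) by simp
  next
    case (Suc j') then show ?thesis using al that by simp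
  qed
  have "(\<Sum>\<alpha>'\<in>U ((a # as) ! Suc i). Q (a # as, (\<alpha> # al)[Suc i := \<alpha>'])) =
      (\<Sum>\<beta>\<in>U b. Q ((a # as)[Suc i := b], (\<alpha> # al)[Suc i := \<beta>]))"
    by (rule NS_D[OF assms(1) _ as' b]) (use i al al' in auto)
  then show "(\<Sum>\<alpha>'\<in>U (as ! i). (\<lambda>(as, al). Q (a # as, \<alpha> # al)) (as, al[i := \<alpha>'])) =
      (\<Sum>\<beta>\<in>U b. (\<lambda>(as, al). Q (a # as, \<alpha> # al)) (as[i := b], al[i := \<beta>]))" by simp
qed

lemma box_Cons: "box N U (b # bs) (\<beta> # bl) = (\<lambda>(\<gamma>, x). \<gamma> # x) ` (cyl N U b \<beta> \<times> box N U bs bl)"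
proof (intro equalityI subsetI)
  fix xs assume h: "xs \<in> box N U (b # bs) (\<beta> # bl)"
  then obtain \<gamma> x where xs: "xs = \<gamma> # x" by (cases xs) (auto simp: box_def)
  have h2: "length xs = Suc (length bs)" "\<And>i. i < Suc (length bs) \<Longrightarrow> xs ! i \<in> cyl N U ((b # bs) ! i) ((\<beta> # bl) ! i)"
    using h by (auto simp: box_def)
  have "\<gamma> \<in> cyl N U b \<beta>" using h2(2)[of 0] xs by simp
  moreover have "x \<in> box N U bs bl"
    unfolding box_def
  proof (intro CollectI conjI allI impI)
    show "length x = length bs" using h2(1) xs by simp
    fix i assume "i < length bs"
    then show "x ! i \<in> cyl N U (bs ! i) (bl ! i)" using h2(2)[of "Suc i"] xs by simp
  qed
  ultimately show "xs \<in> (\<lambda>(\<gamma>, x). \<gamma> # x) ` (cyl N U b \<beta> \<times> box N U bs bl)" using xs by blast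
next
  fix xs assume "xs \<in> (\<lambda>(\<gamma>, x). \<gamma> # x) ` (cyl N U b \<beta> \<times> box N U bs bl)"
  then obtain \<gamma> x where xs: "xs = \<gamma> # x" "\<gamma> \<in> cyl N U b \<beta>" "x \<in> box N U bs bl" by auto
  then show "xs \<in> box N U (b # bs) (\<beta> # bl)"
    by (auto simp: box_def nth_Cons split: nat.splits)
qed

lemma swap3:
  fixes K :: "'a \<Rightarrow> 'b \<Rightarrow> real"
  shows "(\<Sum>x\<in>B. \<Sum>a\<in>I. \<Sum>\<alpha>\<in>W a. K a \<alpha> * m a \<alpha> x) = (\<Sum>a\<in>I. \<Sum>\<alpha>\<in>W a. K a \<alpha> * (\<Sum>x\<in>B. m a \<alpha> x))"
proof -
  have e1: "(\<Sum>x\<in>B. \<Sum>a\<in>I. \<Sum>\<alpha>\<in>W a. K a \<alpha> * m a \<alpha> x) = (\<Sum>a\<in>I. \<Sum>x\<in>B. \<Sum>\<alpha>\<in>W a. K a \<alpha> * m a \<alpha> x)"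
    by (rule sum.swap)
  have e2: "(\<Sum>a\<in>I. \<Sum>x\<in>B. \<Sum>\<alpha>\<in>W a. K a \<alpha> * m a \<alpha> x) = (\<Sum>a\<in>I. \<Sum>\<alpha>\<in>W a. \<Sum>x\<in>B. K a \<alpha> * m a \<alpha> x)"
    by (rule sum.cong[OF refl]) (rule sum.swap)
  have e3: "(\<Sum>a\<in>I. \<Sum>\<alpha>\<in>W a. \<Sum>x\<in>B. K a \<alpha> * m a \<alpha> x) = (\<Sum>a\<in>I. \<Sum>\<alpha>\<in>W a. K a \<alpha> * (\<Sum>x\<in>B. m a \<alpha> x))"
    by (simp only: sum_distrib_left)
  show ?thesis using trans[OF e1 trans[OF e2 e3]] .
qed

lemma mu_box:
  assumes N: "N \<ge> 1" and fin: "\<forall>a\<in>{1..N}. finite (U a) \<and> U a \<noteq> {}"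
  shows "NSk N U k Q \<Longrightarrow> (bs, bl) \<in> IO N U k \<Longrightarrow> (\<Sum>x\<in>box N U bs bl. mu N U Q x) = Q (bs, bl)"
proof (induction k arbitrary: Q bs bl)
  case 0
  then have "bs = []" "bl = []" by (auto simp: IO_def inputs_def outs_def)
  moreover have "box N U [] [] = {[]}" by (auto simp: box_def)
  ultimately show ?case by simp
next
  case (Suc k)
  have lens: "length bs = Suc k" "length bl = Suc k" using Suc.prems(2) by (auto simp: IO_def inputs_def outs_def)
  then obtain b bs' \<beta> bl' where bs: "bs = b # bs'" and bl: "bl = \<beta> # bl'"
    by (metis length_Suc_conv)
  have inp: "\<And>i. i < Suc k \<Longrightarrow> bs ! i \<in> {1..N}" using Suc.prems(2) by (auto simp: IO_def inputs_def)
  have outp: "\<And>i. i < Suc k \<Longrightarrow> bl ! i \<in> U (bs ! i)" using Suc.prems(2) lens by (auto simp: IO_def outs_def)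
  have bI: "b \<in> {1..N}" using inp[of 0] bs by simp
  have betaU: "\<beta> \<in> U b" using outp[of 0] bs bl by simp
  have i1: "bs' \<in> inputs N k" unfolding inputs_def
  proof (intro CollectI conjI allI impI)
    show "length bs' = k" using lens bs by simp
    fix i assume "i < k"
    then show "bs' ! i \<in> {1..N}" using inp[of "Suc i"] bs by simp
  qed
  have o1: "bl' \<in> outs U bs'" unfolding outs_def
  proof (intro CollectI conjI allI impI)
    show "length bl' = length bs'" using lens bs bl by simp
    fix i assume "i < length bs'"
    then show "bl' ! i \<in> U (bs' ! i)" using outp[of "Suc i"] bs bl lens by simp
  qed
  have IO': "(bs', bl') \<in> IO N U k" using i1 o1 by (simp add: IO_def)
  have IH: "(\<Sum>x\<in>box N U bs' bl'. mu N U (\<lambda>(as, al). Q (a # as, \<alpha> # al)) x) = Q (a # bs', \<alpha> # bl')"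
    if "a \<in> {1..N}" "\<alpha> \<in> U a" for a \<alpha>
    using Suc.IH[OF NS_cons[OF Suc.prems(1) that] IO'] by simp
  have inj: "inj_on (\<lambda>(\<gamma>, x). \<gamma> # x) (cyl N U b \<beta> \<times> box N U bs' bl')"
    by (auto simp: inj_on_def)
  define c where "c = (\<Sum>\<alpha>\<in>U 1. Q (1 # bs', \<alpha> # bl'))"
  have hc: "\<forall>a\<in>{1..N}. (\<Sum>\<alpha>\<in>U a. Q (a # bs', \<alpha> # bl')) = c"
  proof
    fix a assume a: "a \<in> {1..N}"
    have as': "a # bs' \<in> inputs N (Suc k)" using a IO' by (auto simp: IO_def inputs_def nth_Cons split: nat.splits)
    have "(\<Sum>\<alpha>\<in>U ((a # bs') ! 0). Q (a # bs', (\<beta> # bl')[0 := \<alpha>])) =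
        (\<Sum>\<beta>'\<in>U 1. Q ((a # bs')[0 := 1], (\<beta> # bl')[0 := \<beta>']))"
    proof (rule NS_D[OF Suc.prems(1) _ as'])
      show "1 \<in> {1..N}" using N by simp
      show "length (\<beta> # bl') = Suc k" using lens bl by simp
      fix j assume "j < Suc k" "j \<noteq> 0"
      then obtain j' where "j = Suc j'" "j' < k" by (cases j) auto
      then show "(\<beta> # bl') ! j \<in> U ((a # bs') ! j)" using outp[of j] bs bl by simp
    qed simp
    then show "(\<Sum>\<alpha>\<in>U a. Q (a # bs', \<alpha> # bl')) = c" by (simp add: c_def)
  qed
  have "(\<Sum>x\<in>box N U bs bl. mu N U Q x) = (\<Sum>p\<in>cyl N U b \<beta> \<times> box N U bs' bl'. mu N U Q ((\<lambda>(\<gamma>, x). \<gamma> # x) p))"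
    unfolding bs bl box_Cons using sum.reindex[OF inj, of "mu N U Q"] by (simp only: o_def)
  also have "\<dots> = (\<Sum>(\<gamma>, x)\<in>cyl N U b \<beta> \<times> box N U bs' bl'. mu N U Q (\<gamma> # x))"
    by (rule sum.cong[OF refl]) (auto split: prod.splits)
  also have "\<dots> = (\<Sum>\<gamma>\<in>cyl N U b \<beta>. \<Sum>x\<in>box N U bs' bl'. mu N U Q (\<gamma> # x))"
    by (rule sum.cartesian_product[symmetric])
  also have "\<dots> = (\<Sum>\<gamma>\<in>cyl N U b \<beta>. \<Sum>a\<in>{1..N}. \<Sum>\<alpha>\<in>U a. Kw N U \<gamma> a \<alpha> * (\<Sum>x\<in>box N U bs' bl'. mu N U (\<lambda>(as, al). Q (a # as, \<alpha> # al)) x))"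
    by (simp only: mu.simps swap3)
  also have "\<dots> = (\<Sum>\<gamma>\<in>cyl N U b \<beta>. \<Sum>a\<in>{1..N}. \<Sum>\<alpha>\<in>U a. Kw N U \<gamma> a \<alpha> * Q (a # bs', \<alpha> # bl'))"
    by (intro sum.cong refl) (simp only: IH)
  also have "\<dots> = Q (b # bs', \<beta> # bl')"
    by (rule single[OF N fin hc bI betaU])
  finally show ?case using bs bl by simp
qed

definition rhoP :: "nat \<Rightarrow> (nat \<Rightarrow> 'o set) \<Rightarrow> (nat list \<times> 'o list \<Rightarrow> real) \<Rightarrow> (nat \<Rightarrow> 'o) list set \<Rightarrow> real" where
  "rhoP N U P p = (\<Sum>x\<in>p. mu N U P x)"



lemma Ak_finite: "\<forall>a\<in>{1..N}. finite (U a) \<Longrightarrow> X \<in> Ak N U k \<Longrightarrow> finite X"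
  using Ak_sub_gamk gamk_finite finite_subset by metis

lemma rho_box:
  assumes "N \<ge> 1" "\<forall>a\<in>{1..N}. finite (U a) \<and> U a \<noteq> {}" "is_PR N U k P" "(as, al) \<in> IO N U k"
  shows "rhoP N U P (box N U as al) = P (as, al)"
  unfolding rhoP_def by (rule mu_box[OF assms(1,2) PR_NS[OF assms(3)] assms(4)])

lemma rho_Union:
  assumes "\<forall>a\<in>{1..N}. finite (U a)" "F \<subseteq> Ak N U k" "pairwise disjnt F"
  shows "rhoP N U P (\<Union>F) = (\<Sum>q\<in>F. rhoP N U P q)"
proof -
  have f1: "\<forall>A\<in>F. finite A" using assms(1,2) Ak_finite by blast
  have f2: "\<forall>A\<in>F. \<forall>B\<in>F. A \<noteq> B \<longrightarrow> A \<inter> B = {}" using assms(3) unfolding pairwise_def disjnt_def by blast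
  show ?thesis unfolding rhoP_def using sum.Union_disjoint[OF f1 f2, of "mu N U P"] by (simp only: o_def)
qed

lemma rho_nonneg:
  assumes "N \<ge> 1" "\<forall>a\<in>{1..N}. finite (U a) \<and> U a \<noteq> {}" "is_PR N U k P" "decomposable N U k p"
  shows "0 \<le> rhoP N U P p"
proof -
  obtain F where F: "F \<subseteq> Ak N U k" "pairwise disjnt F" "\<Union>F = p" using assms(4) by (auto simp: decomposable_def)
  have f: "\<forall>a\<in>{1..N}. finite (U a)" using assms(2) by blast
  have "rhoP N U P p = (\<Sum>q\<in>F. rhoP N U P q)" using rho_Union[OF f F(1,2)] F(3) by simp
  also have "\<dots> \<ge> 0"
  proof (rule sum_nonneg)
    fix q assume "q \<in> F"
    then obtain as al where q: "q = box N U as al" "(as, al) \<in> IO N U k" using F(1) by (auto simp: Ak_def)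
    have "0 \<le> P (as, al)" using assms(3) q(2) by (auto simp: is_PR_def)
    then show "0 \<le> rhoP N U P q" using rho_box[OF assms(1,2,3) q(2)] q(1) by simp
  qed
  finally show ?thesis .
qed

lemma rho_one:
  assumes "N \<ge> 1" "\<forall>a\<in>{1..N}. finite (U a) \<and> U a \<noteq> {}" "is_PR N U k P"
  shows "rhoP N U P (gamk N U k) = 1"
proof -
  define as where "as = replicate k (1::nat)"
  have as: "as \<in> inputs N k" using rep_inputs[OF assms(1)] by (simp add: as_def)
  have f: "\<forall>a\<in>{1..N}. finite (U a)" using assms(2) by blast
  have fo: "finite (outs U as)" by (rule outs_finite[OF as f])
  have fb: "\<forall>al\<in>outs U as. finite (box N U as al)"
    using Ak_finite[OF f] as by (auto simp: Ak_def IO_def)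
  have db: "\<forall>al\<in>outs U as. \<forall>al'\<in>outs U as. al \<noteq> al' \<longrightarrow> box N U as al \<inter> box N U as al' = {}"
  proof (intro ballI impI)
    fix a b assume "a \<in> outs U as" "b \<in> outs U as" "a \<noteq> b"
    then show "box N U as a \<inter> box N U as b = {}" using box_disj[of a as b N U] by (auto simp: outs_def)
  qed
  have "rhoP N U P (gamk N U k) = (\<Sum>al\<in>outs U as. rhoP N U P (box N U as al))"
    unfolding gamk_Union[OF as, of U] rhoP_def by (rule sum.UNION_disjoint[OF fo fb db])
  also have "\<dots> = (\<Sum>al\<in>outs U as. P (as, al))"
    by (rule sum.cong[OF refl]) (rule rho_box[OF assms], use as in \<open>simp add: IO_def\<close>)
  also have "\<dots> = 1" using assms(3) as by (auto simp: is_PR_def)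
  finally show ?thesis .
qed

lemma osum_sum:
  fixes f :: "(nat \<Rightarrow> 'o) list \<Rightarrow> real" and U :: "nat \<Rightarrow> 'o set"
  shows "(\<forall>p\<in>set ps. finite p) \<Longrightarrow> osum (oplusk N U k) ps = Some s \<Longrightarrow>
    s = \<Union>(set ps) \<and> sum f s = sum_list (map (sum f) ps)"
proof (induction ps arbitrary: s rule: induct_list012)
  case 1 then show ?case by simp
next
  case (2 p) then show ?case by simp
next
  case (3 p q ps)
  obtain s' where s': "osum (oplusk N U k) (q # ps) = Some s'" "oplusk N U k p s' = Some s"
    using "3.prems"(2) by (cases "osum (oplusk N U k) (q # ps)") auto
  have IH: "s' = \<Union>(set (q # ps)) \<and> sum f s' = sum_list (map (sum f) (q # ps))"
    by (rule "3.IH"(2)[OF _ s'(1)]) (use "3.prems"(1) in simp)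
  have d: "p \<inter> s' = {}" "s = p \<union> s'" using s'(2) by (auto simp: oplusk_Some)
  have fp: "finite p" "finite s'" using "3.prems"(1) IH by auto
  have hs: "sum f s = sum f p + sum f s'" using d fp by (simp add: sum.union_disjoint)
  have IH1: "s' = \<Union>(set (q # ps))" and IH2: "sum f s' = sum_list (map (sum f) (q # ps))" using IH by auto
  have "sum f s = sum f p + sum_list (map (sum f) (q # ps))" using hs IH2 by simp
  then show ?case using IH1 d(2) by simp
qed

lemma rho_state:
  assumes N: "N \<ge> 1" and fin: "\<forall>a\<in>{1..N}. finite (U a) \<and> U a \<noteq> {}" and P: "is_PR N U k P"
  shows "is_state (Ek N U k) (oplusk N U k) (gamk N U k) (rhoP N U P)"
  unfolding is_state_def
proof (intro conjI ballI allI impI)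
  have f: "\<forall>a\<in>{1..N}. finite (U a)" using fin by blast
  have fg: "finite (gamk N U k)" by (rule gamk_finite[OF f])
  fix p assume p: "p \<in> Ek N U k"
  have d: "decomposable N U k p" "decomposable N U k (gamk N U k - p)" "p \<subseteq> gamk N U k" using p by (auto simp: Ek_def)
  have "rhoP N U P (gamk N U k) = rhoP N U P (gamk N U k - p) + rhoP N U P p"
    unfolding rhoP_def by (rule sum.subset_diff[OF d(3) fg])
  then have "rhoP N U P (gamk N U k - p) + rhoP N U P p = 1" using rho_one[OF N fin P] by simp
  moreover have "0 \<le> rhoP N U P (gamk N U k - p)" "0 \<le> rhoP N U P p"
    using rho_nonneg[OF N fin P] d by auto
  ultimately show "0 \<le> rhoP N U P p" "rhoP N U P p \<le> 1" by linarith+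
next
  show "rhoP N U P (gamk N U k) = 1" by (rule rho_one[OF N fin P])
next
  have f: "\<forall>a\<in>{1..N}. finite (U a)" using fin by blast
  fix ps s assume h: "ps \<noteq> [] \<and> set ps \<subseteq> Ek N U k \<and> osum (oplusk N U k) ps = Some s"
  have "\<forall>p\<in>set ps. finite p" using h gamk_finite[OF f] Ek_sub finite_subset by (metis subsetD)
  then show "rhoP N U P s = sum_list (map (rhoP N U P) ps)"
    using osum_sum[of ps N U k s "mu N U P"] h unfolding rhoP_def by blast
qed

lemma agree_Ek:
  assumes N: "N \<ge> 1" and f: "\<forall>a\<in>{1..N}. finite (U a)"
    and s1: "is_state (Ek N U k) (oplusk N U k) (gamk N U k) \<rho>1"
    and s2: "is_state (Ek N U k) (oplusk N U k) (gamk N U k) \<rho>2"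
    and ag: "\<And>as al. (as, al) \<in> IO N U k \<Longrightarrow> \<rho>1 (box N U as al) = \<rho>2 (box N U as al)"
    and p: "p \<in> Ek N U k"
  shows "\<rho>1 p = \<rho>2 p"
proof -
  obtain F where F: "F \<subseteq> Ak N U k" "pairwise disjnt F" "\<Union>F = p" using p by (auto simp: Ek_def decomposable_def)
  have "\<rho>1 p = (\<Sum>q\<in>F. \<rho>1 q)" by (rule state_decomp[OF N f s1 p F])
  also have "\<dots> = (\<Sum>q\<in>F. \<rho>2 q)"
  proof (rule sum.cong[OF refl])
    fix q assume "q \<in> F"
    then obtain as al where q: "q = box N U as al" "(as, al) \<in> IO N U k" using F(1) by (auto simp: Ak_def)
    then show "\<rho>1 q = \<rho>2 q" using ag by simp
  qed
  also have "\<dots> = \<rho>2 p" by (rule state_decomp[OF N f s2 p F, symmetric])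
  finally show ?thesis .
qed

lemma oplus_closed:
  assumes "N \<ge> 1" "p \<in> Ek N U k" "q \<in> Ek N U k" "oplusk N U k p q = Some r"
  shows "r \<in> Ek N U k"
proof -
  have "\<forall>p\<in>Ek N U k. \<forall>q\<in>Ek N U k. \<forall>r. oplusk N U k p q = Some r \<longrightarrow> r \<in> Ek N U k"
    using EA[OF assms(1), of U k] unfolding effect_algebra_def by (elim conjE)
  then show ?thesis using assms(2-4) by blast
qed

lemma osum_Ek: "N \<ge> 1 \<Longrightarrow> set ps \<subseteq> Ek N U k \<Longrightarrow> osum (oplusk N U k) ps = Some s \<Longrightarrow> s \<in> Ek N U k"
proof (induction ps arbitrary: s rule: induct_list012)
  case 1 then show ?case by simp
next
  case (2 p) then show ?case by simp
next
  case (3 p q ps)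
  obtain s' where s': "osum (oplusk N U k) (q # ps) = Some s'" "oplusk N U k p s' = Some s"
    using "3.prems"(3) by (cases "osum (oplusk N U k) (q # ps)") auto
  have "s' \<in> Ek N U k" using "3.IH"(2)[OF "3.prems"(1) _ s'(1)] "3.prems"(2) by simp
  then show ?case using oplus_closed[OF "3.prems"(1) _ _ s'(2)] "3.prems"(2) by simp
qed

lemma state_restrict:
  assumes N: "N \<ge> 1" and s: "is_state (Ek N U k) (oplusk N U k) (gamk N U k) \<rho>"
  shows "is_state (Ek N U k) (oplusk N U k) (gamk N U k) (restrict \<rho> (Ek N U k))"
  unfolding is_state_def
proof (intro conjI ballI allI impI)
  fix p assume "p \<in> Ek N U k"
  then show "0 \<le> restrict \<rho> (Ek N U k) p" "restrict \<rho> (Ek N U k) p \<le> 1" using s by (auto simp: is_state_def)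
next
  show "restrict \<rho> (Ek N U k) (gamk N U k) = 1" using s gamk_Ek[OF N, of U k] by (simp add: is_state_def)
next
  fix ps s' assume h: "ps \<noteq> [] \<and> set ps \<subseteq> Ek N U k \<and> osum (oplusk N U k) ps = Some s'"
  have sE: "s' \<in> Ek N U k" using osum_Ek[OF N] h by blast
  have rs: "\<rho> s' = sum_list (map \<rho> ps)" using s h unfolding is_state_def by blast
  have me: "map (restrict \<rho> (Ek N U k)) ps = map \<rho> ps" by (rule map_cong[OF refl]) (use h in auto)
  have r: "restrict \<rho> (Ek N U k) s' = \<rho> s'" using sE by simp
  show "restrict \<rho> (Ek N U k) s' = sum_list (map (restrict \<rho> (Ek N U k)) ps)" by (simp only: r rs me)
qed

theorem mainTheorem1:
  fixes N k :: nat and U :: "nat \<Rightarrow> 'o set"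
  assumes "N \<ge> 1" and "k \<ge> 1"
    and "\<And>a. a \<in> {1..N} \<Longrightarrow> finite (U a) \<and> U a \<noteq> {}"
  shows "(effect_algebra (Ek N U k) (oplusk N U k) {} (gamk N U k) \<and> Ak N U k \<subseteq> Ek N U k)
    \<and> (\<forall>\<rho>. is_state (Ek N U k) (oplusk N U k) (gamk N U k) \<rho> \<longrightarrow> is_PR N U k (PofS N U k \<rho>))
    \<and> (\<forall>P. is_PR N U k P \<longrightarrow>
           (\<exists>\<rho>. is_state (Ek N U k) (oplusk N U k) (gamk N U k) \<rho>
             \<and> (\<forall>(as, al)\<in>IO N U k. \<rho> (box N U as al) = P (as, al))
             \<and> (\<forall>\<rho>'. is_state (Ek N U k) (oplusk N U k) (gamk N U k) \<rho>'
                     \<and> (\<forall>(as, al)\<in>IO N U k. \<rho>' (box N U as al) = P (as, al))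
                     \<longrightarrow> (\<forall>p\<in>Ek N U k. \<rho>' p = \<rho> p))
             \<and> (\<forall>p\<in>Ek N U k. \<forall>F. F \<subseteq> Ak N U k \<and> pairwise disjnt F \<and> \<Union>F = p
                     \<longrightarrow> \<rho> p = (\<Sum>q\<in>F. \<rho> q))))
    \<and> bij_betw (PofS N U k) (States N U k) (PRStates N U k)"
proof -
  have N: "N \<ge> 1" by (rule assms(1))
  have fin: "\<forall>a\<in>{1..N}. finite (U a) \<and> U a \<noteq> {}" using assms(3) by blast
  have f: "\<forall>a\<in>{1..N}. finite (U a)" using fin by blast
  have P1: "effect_algebra (Ek N U k) (oplusk N U k) {} (gamk N U k) \<and> Ak N U k \<subseteq> Ek N U k"
    using EA[OF N] Ak_sub_Ek by blast
  have P2: "\<forall>\<rho>. is_state (Ek N U k) (oplusk N U k) (gamk N U k) \<rho> \<longrightarrow> is_PR N U k (PofS N U k \<rho>)"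
    using state_PR[OF N f] by blast
  have P3: "\<forall>P. is_PR N U k P \<longrightarrow>
           (\<exists>\<rho>. is_state (Ek N U k) (oplusk N U k) (gamk N U k) \<rho>
             \<and> (\<forall>(as, al)\<in>IO N U k. \<rho> (box N U as al) = P (as, al))
             \<and> (\<forall>\<rho>'. is_state (Ek N U k) (oplusk N U k) (gamk N U k) \<rho>'
                     \<and> (\<forall>(as, al)\<in>IO N U k. \<rho>' (box N U as al) = P (as, al))
                     \<longrightarrow> (\<forall>p\<in>Ek N U k. \<rho>' p = \<rho> p))
             \<and> (\<forall>p\<in>Ek N U k. \<forall>F. F \<subseteq> Ak N U k \<and> pairwise disjnt F \<and> \<Union>F = p
                     \<longrightarrow> \<rho> p = (\<Sum>q\<in>F. \<rho> q)))"
  proof (intro allI impI)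
    fix P assume P: "is_PR N U k P"
    let ?\<rho> = "rhoP N U P"
    have st: "is_state (Ek N U k) (oplusk N U k) (gamk N U k) ?\<rho>" by (rule rho_state[OF N fin P])
    have bx: "\<forall>(as, al)\<in>IO N U k. ?\<rho> (box N U as al) = P (as, al)"
      using rho_box[OF N fin P] by blast
    have un: "\<forall>\<rho>'. is_state (Ek N U k) (oplusk N U k) (gamk N U k) \<rho>'
                     \<and> (\<forall>(as, al)\<in>IO N U k. \<rho>' (box N U as al) = P (as, al))
                     \<longrightarrow> (\<forall>p\<in>Ek N U k. \<rho>' p = ?\<rho> p)"
    proof (intro allI impI ballI)
      fix \<rho>' p assume h: "is_state (Ek N U k) (oplusk N U k) (gamk N U k) \<rho>'
                     \<and> (\<forall>(as, al)\<in>IO N U k. \<rho>' (box N U as al) = P (as, al))" and p: "p \<in> Ek N U k"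
      have ag: "\<rho>' (box N U as al) = ?\<rho> (box N U as al)" if "(as, al) \<in> IO N U k" for as al
        using h that rho_box[OF N fin P that] by auto
      show "\<rho>' p = ?\<rho> p" by (rule agree_Ek[OF N f _ st ag p]) (use h in blast)
    qed
    have dc: "\<forall>p\<in>Ek N U k. \<forall>F. F \<subseteq> Ak N U k \<and> pairwise disjnt F \<and> \<Union>F = p
                     \<longrightarrow> ?\<rho> p = (\<Sum>q\<in>F. ?\<rho> q)"
      using state_decomp[OF N f st] by blast
    show "\<exists>\<rho>. is_state (Ek N U k) (oplusk N U k) (gamk N U k) \<rho>
             \<and> (\<forall>(as, al)\<in>IO N U k. \<rho> (box N U as al) = P (as, al))
             \<and> (\<forall>\<rho>'. is_state (Ek N U k) (oplusk N U k) (gamk N U k) \<rho>'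
                     \<and> (\<forall>(as, al)\<in>IO N U k. \<rho>' (box N U as al) = P (as, al))
                     \<longrightarrow> (\<forall>p\<in>Ek N U k. \<rho>' p = \<rho> p))
             \<and> (\<forall>p\<in>Ek N U k. \<forall>F. F \<subseteq> Ak N U k \<and> pairwise disjnt F \<and> \<Union>F = p
                     \<longrightarrow> \<rho> p = (\<Sum>q\<in>F. \<rho> q))"
      using st bx un dc by blast
  qed
  have P4: "bij_betw (PofS N U k) (States N U k) (PRStates N U k)"
    unfolding bij_betw_def
  proof (intro conjI)
    show "inj_on (PofS N U k) (States N U k)"
    proof (rule inj_onI)
      fix \<rho>1 \<rho>2 assume r1: "\<rho>1 \<in> States N U k" and r2: "\<rho>2 \<in> States N U k" and eq: "PofS N U k \<rho>1 = PofS N U k \<rho>2"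
      have s1: "is_state (Ek N U k) (oplusk N U k) (gamk N U k) \<rho>1" "\<rho>1 \<in> extensional (Ek N U k)"
        using r1 by (auto simp: States_def)
      have s2: "is_state (Ek N U k) (oplusk N U k) (gamk N U k) \<rho>2" "\<rho>2 \<in> extensional (Ek N U k)"
        using r2 by (auto simp: States_def)
      have ag: "\<rho>1 (box N U as al) = \<rho>2 (box N U as al)" if "(as, al) \<in> IO N U k" for as al
        using PofS_IO[OF that, of \<rho>1] PofS_IO[OF that, of \<rho>2] eq by simp
      show "\<rho>1 = \<rho>2"
        by (rule extensionalityI[OF s1(2) s2(2)]) (rule agree_Ek[OF N f s1(1) s2(1) ag])
    qed
  next
    show "PofS N U k ` States N U k = PRStates N U k"
    proof (intro equalityI subsetI)
      fix P assume "P \<in> PofS N U k ` States N U k"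
      then obtain \<rho> where r: "\<rho> \<in> States N U k" "P = PofS N U k \<rho>" by blast
      have "is_PR N U k P" using P2 r by (auto simp: States_def)
      moreover have "P \<in> extensional (IO N U k)" using r(2) by (simp add: PofS_def)
      ultimately show "P \<in> PRStates N U k" by (simp add: PRStates_def)
    next
      fix P assume "P \<in> PRStates N U k"
      then have P: "is_PR N U k P" "P \<in> extensional (IO N U k)" by (auto simp: PRStates_def)
      define \<rho> where "\<rho> = restrict (rhoP N U P) (Ek N U k)"
      have "\<rho> \<in> States N U k"
        unfolding States_def \<rho>_def using state_restrict[OF N rho_state[OF N fin P(1)]] by simp
      moreover have "PofS N U k \<rho> = P"
      proof (rule extensionalityI[OF _ P(2)])
        show "PofS N U k \<rho> \<in> extensional (IO N U k)" by (simp add: PofS_def)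
        fix x assume x: "x \<in> IO N U k"
        then obtain as al where x2: "x = (as, al)" by force
        have "box N U as al \<in> Ek N U k" using x x2 box_Ak Ak_sub_Ek by blast
        then show "PofS N U k \<rho> x = P x"
          using PofS_IO[of as al N U k \<rho>] x x2 rho_box[OF N fin P(1)] by (simp add: \<rho>_def)
      qed
      ultimately show "P \<in> PofS N U k ` States N U k" by blast
    qed
  qed
  show ?thesis using P1 P2 P3 P4 by blast
qed


end
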